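(* Let $n\geq1$ and let $a_1,\ldots,a_n$ be positive real numbers. Let $A\subset\mathbb{R}^n$ be the ray emanating from $0$ and passing through $(a_1,\ldots,a_n)$. Then there exists an infinite sequence of points $x_1,x_2,\ldots$ in $\mathbb{Z}^n$ such that $x_1$ is a standard coordinate vector, $x_{i+1}-x_i$ is a standard coordinate vector for every $i$, and each $x_i$ is within Euclidean distance $\sqrt{2n}$ of $A$.
   Context: A standard coordinate vector is one of the standard basis vectors $e_1,\ldots,e_n$ of $\mathbb{R}^n$. *)

theory Defs
  imports "HOL-Analysis.Analysis"
begin

definition std_coord_vec :: "real^'n \<Rightarrow> bool" where
  "std_coord_vec v \<longleftrightarrow> (\<exists>i. v = axis i 1)"

definition ray_from_origin :: "real^'n \<Rightarrow> (real^'n) set" where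
  "ray_from_origin a = {t *\<^sub>R a | t. t \<ge> 0}"

definition integer_point :: "real^'n \<Rightarrow> bool" where
  "integer_point x \<longleftrightarrow> (\<forall>i. x $ i \<in> \<int>)"

end

theory Submission
  imports Defs
begin

definition inv_pt :: "real^'n \<Rightarrow> real^'n \<Rightarrow> bool" where
  "inv_pt a x \<longleftrightarrow> integer_point x \<and> (\<forall>i. x $ i \<ge> 0) \<and>
     (\<forall>i j. x $ i / a $ i \<le> (x $ j + 1) / a $ j)"

definition step_idx :: "real^'n \<Rightarrow> real^'n \<Rightarrow> 'n" where
  "step_idx a x = (SOME j. \<forall>j'. (x $ j + 1) / a $ j \<le> (x $ j' + 1) / a $ j')"

lemma step_idx_min:
  fixes a x :: "real^'n"
  shows "(x $ step_idx a x + 1) / a $ step_idx a x \<le> (x $ j' + 1) / a $ j'"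
proof -
  let ?g = "\<lambda>j. (x $ j + 1) / a $ j"
  have "Min (range ?g) \<in> range ?g" by (rule Min_in) auto
  then obtain j where j: "?g j = Min (range ?g)" by (metis (no_types, lifting) imageE)
  have "\<forall>j'. ?g j \<le> ?g j'" unfolding j by (auto intro: Min_le)
  hence "\<exists>j. \<forall>j'. ?g j \<le> ?g j'" by blast
  from someI_ex[OF this] show ?thesis unfolding step_idx_def by blast
qed

lemma inv_step:
  fixes a x :: "real^'n"
  assumes pos: "\<forall>i. a $ i > 0" and I: "inv_pt a x"
  shows "inv_pt a (x + axis (step_idx a x) 1)"
proof -
  let ?j0 = "step_idx a x"
  let ?y = "x + axis ?j0 1"
  have int: "integer_point ?y" using I unfolding inv_pt_def integer_point_def
    by (auto simp: axis_def)
  have nn: "\<forall>i. ?y $ i \<ge> 0" using I unfolding inv_pt_def by (auto simp: axis_def)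
  have "?y $ i / a $ i \<le> (?y $ j + 1) / a $ j" for i j
  proof -
    have mono: "(x $ j + 1) / a $ j \<le> (?y $ j + 1) / a $ j"
      using pos by (intro divide_right_mono) (auto simp: axis_def less_imp_le)
    show ?thesis
    proof (cases "i = ?j0")
      case True
      hence "?y $ i / a $ i = (x $ ?j0 + 1) / a $ ?j0" by (simp add: axis_def)
      also have "\<dots> \<le> (x $ j + 1) / a $ j" by (rule step_idx_min)
      finally show ?thesis using mono by linarith
    next
      case False
      hence "?y $ i / a $ i = x $ i / a $ i" by (simp add: axis_def)
      also have "\<dots> \<le> (x $ j + 1) / a $ j" using I unfolding inv_pt_def by blast
      finally show ?thesis using mono by linarith
    qed
  qed
  thus ?thesis using int nn unfolding inv_pt_def by blast
qed

lemma inv_dist: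
  fixes a x :: "real^'n"
  assumes pos: "\<forall>i. a $ i > 0" and I: "inv_pt a x"
  shows "infdist x (ray_from_origin a) \<le> sqrt (2 * real CARD('n))"
proof -
  let ?h = "\<lambda>i. x $ i / a $ i"
  define t where "t = Max (range ?h)"
  have ht: "?h i \<le> t" for i unfolding t_def by (auto intro: Max_ge)
  have "t \<in> range ?h" unfolding t_def by (rule Max_in) auto
  then obtain i0 where i0: "t = ?h i0" by auto
  have t0: "t \<ge> 0" using I pos i0 unfolding inv_pt_def by (simp add: less_imp_le)
  have tle: "t \<le> (x $ j + 1) / a $ j" for j using I i0 unfolding inv_pt_def by blast
  have comp: "\<bar>x $ j - t * a $ j\<bar> \<le> 1" for j
  proof -
    have aj: "a $ j > 0" using pos by blast
    have "x $ j \<le> t * a $ j" using ht[of j] aj by (simp add: divide_le_eq)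
    moreover have "t * a $ j \<le> x $ j + 1" using tle[of j] aj by (simp add: le_divide_eq)
    ultimately show ?thesis by linarith
  qed
  have mem: "t *\<^sub>R a \<in> ray_from_origin a" unfolding ray_from_origin_def using t0 by blast
  have "infdist x (ray_from_origin a) \<le> dist x (t *\<^sub>R a)" by (rule infdist_le[OF mem])
  also have "\<dots> = sqrt (\<Sum>j\<in>UNIV. (x $ j - t * a $ j)^2)"
    unfolding dist_norm norm_vec_def L2_set_def by simp
  also have "\<dots> \<le> sqrt (\<Sum>j\<in>(UNIV::'n set). 1)"
  proof (intro real_sqrt_le_mono sum_mono)
    fix j
    have "\<bar>x $ j - t * a $ j\<bar>^2 \<le> 1^2"
      using comp[of j] by (intro power_mono) auto
    thus "(x $ j - t * a $ j)^2 \<le> 1" by simp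
  qed
  also have "\<dots> \<le> sqrt (2 * real CARD('n))" by simp
  finally show ?thesis .
qed

theorem proposition2p8:
  fixes a :: "real^'n"
  assumes "\<forall>i. a $ i > 0"
  shows "\<exists>x :: nat \<Rightarrow> real^'n.
           (\<forall>k. integer_point (x k)) \<and>
           std_coord_vec (x 0) \<and>
           (\<forall>k. std_coord_vec (x (Suc k) - x k)) \<and>
           (\<forall>k. infdist (x k) (ray_from_origin a) \<le> sqrt (2 * real CARD('n)))"
proof -
  have "Max (range (\<lambda>i. a $ i)) \<in> range (\<lambda>i. a $ i)" by (rule Max_in) auto
  then obtain m where m: "a $ m = Max (range (\<lambda>i. a $ i))" by (metis (no_types, lifting) imageE)
  have mmax: "a $ i \<le> a $ m" for i unfolding m by (auto intro: Max_ge)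
  define x0 :: "real^'n" where "x0 = axis m 1"
  have I0: "inv_pt a x0"
    unfolding inv_pt_def integer_point_def x0_def
  proof (intro conjI allI)
    fix i j
    have aj: "a $ j > 0" "a $ m > 0" using assms by auto
    show "axis m 1 $ i / a $ i \<le> (axis m 1 $ j + 1) / a $ j"
    proof (cases "i = m")
      case True
      have "1 / a $ m \<le> 1 / a $ j" using mmax[of j] aj
        by (simp add: frac_le)
      moreover have "1 / a $ j \<le> (axis m 1 $ j + 1) / a $ j"
        using aj by (intro divide_right_mono) (auto simp: axis_def)
      ultimately show ?thesis using True by (simp add: axis_def)
    next
      case False
      have "0 \<le> (axis m 1 $ j + 1) / a $ j"
        using aj by (auto simp: axis_def)
      thus ?thesis using False by (simp add: axis_def)
    qed
  qed (auto simp: axis_def)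
  define x where "x = rec_nat x0 (\<lambda>_ y. y + axis (step_idx a y) 1)"
  have xs: "x (Suc k) = x k + axis (step_idx a (x k)) 1" for k unfolding x_def by simp
  have x0': "x 0 = x0" unfolding x_def by simp
  have I: "inv_pt a (x k)" for k
    by (induction k) (auto simp: x0' I0 xs intro: inv_step[OF assms])
  show ?thesis
  proof (intro exI conjI allI)
    show "integer_point (x k)" for k using I[of k] unfolding inv_pt_def by blast
    show "std_coord_vec (x 0)" unfolding x0' x0_def std_coord_vec_def by blast
    show "std_coord_vec (x (Suc k) - x k)" for k unfolding xs std_coord_vec_def by auto
    show "infdist (x k) (ray_from_origin a) \<le> sqrt (2 * real CARD('n))" for k
      by (rule inv_dist[OF assms I])
  qed
qed

end
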